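(* The composition of weakly admissible correspondences in $\mathrm{DGRings}^{0,-1}$ is weakly admissible. The composition of anamorphisms is an anamorphism.
   Context: Rings are commutative and unital. $\mathrm{DGRings}^{0,-1}$ is the category of commutative DG rings $R$ with $R^i=0$ for $i\ne 0,-1$. Equivalently, such $R$ is a ring $R^0$, an $R^0$-module $R^{-1}$ and an $R^0$-linear $d:R^{-1}\to R^0$ with $d(x)y=d(y)x$. Quasi-isomorphisms are morphisms inducing isomorphisms on $\ker d$ and $\operatorname{coker} d$. A correspondence from $R_1$ to $R_2$ is a diagram $R_1\xleftarrow{f}R_{12}\xrightarrow{g}R_2$ in $\mathrm{DGRings}^{0,-1}$. The composition of correspondences $R_1\leftarrow R_{12}\to R_2$ and $R_2\leftarrow R_{23}\to R_3$ is $R_1\leftarrow R_{12}\times_{R_2}R_{23}\to R_3$, using the fiber product in $\mathrm{DGRings}^{0,-1}$. A correspondence is weakly admissible if $f$ is a quasi-isomorphism and $R_{12}^{-1}\to R_1^{-1}\times R_2^{-1}$ is surjective. It is an anamorphism if $f$ is a surjective quasi-isomorphism. *)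

theory Defs
  imports "HOL-Algebra.Module" "HOL-Algebra.RingHom"
begin

text \<open>A commutative DG ring concentrated in degrees 0 and -1:
  deg0 = the ring R^0, deg1 = the R^0-module R^{-1}, dif = the differential d.
  (The mult/one fields of the module record deg1 are unused: R^{-1} R^{-1} lands in degree -2, which is 0.)\<close>
record ('a, 'b) dgr =
  deg0 :: "'a ring"
  deg1 :: "('a, 'b) module"
  dif  :: "'b \<Rightarrow> 'a"

definition is_dgr :: "('a, 'b) dgr \<Rightarrow> bool" where
  "is_dgr A \<longleftrightarrow>
     cring (deg0 A) \<and> module (deg0 A) (deg1 A) \<and>
     dif A \<in> carrier (deg1 A) \<rightarrow> carrier (deg0 A) \<and>
     (\<forall>x\<in>carrier (deg1 A). \<forall>y\<in>carrier (deg1 A).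
        dif A (x \<oplus>\<^bsub>deg1 A\<^esub> y) = dif A x \<oplus>\<^bsub>deg0 A\<^esub> dif A y) \<and>
     (\<forall>r\<in>carrier (deg0 A). \<forall>x\<in>carrier (deg1 A).
        dif A (r \<odot>\<^bsub>deg1 A\<^esub> x) = r \<otimes>\<^bsub>deg0 A\<^esub> dif A x) \<and>
     (\<forall>x\<in>carrier (deg1 A). \<forall>y\<in>carrier (deg1 A).
        dif A x \<odot>\<^bsub>deg1 A\<^esub> y = dif A y \<odot>\<^bsub>deg1 A\<^esub> x)"

type_synonym ('a, 'b, 'c, 'd) dgmor = "('a \<Rightarrow> 'c) \<times> ('b \<Rightarrow> 'd)"

definition dg_hom :: "('a, 'b) dgr \<Rightarrow> ('c, 'd) dgr \<Rightarrow> ('a, 'b, 'c, 'd) dgmor \<Rightarrow> bool" where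
  "dg_hom A B \<phi> \<longleftrightarrow>
     fst \<phi> \<in> ring_hom (deg0 A) (deg0 B) \<and>
     snd \<phi> \<in> carrier (deg1 A) \<rightarrow> carrier (deg1 B) \<and>
     (\<forall>x\<in>carrier (deg1 A). \<forall>y\<in>carrier (deg1 A).
        snd \<phi> (x \<oplus>\<^bsub>deg1 A\<^esub> y) = snd \<phi> x \<oplus>\<^bsub>deg1 B\<^esub> snd \<phi> y) \<and>
     (\<forall>r\<in>carrier (deg0 A). \<forall>x\<in>carrier (deg1 A).
        snd \<phi> (r \<odot>\<^bsub>deg1 A\<^esub> x) = fst \<phi> r \<odot>\<^bsub>deg1 B\<^esub> snd \<phi> x) \<and>
     (\<forall>x\<in>carrier (deg1 A). fst \<phi> (dif A x) = dif B (snd \<phi> x))"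

text \<open>ker d (= H^{-1}) and the congruence modulo im d defining coker d (= H^0).\<close>
definition dg_ker :: "('a, 'b) dgr \<Rightarrow> 'b set" where
  "dg_ker A = {x \<in> carrier (deg1 A). dif A x = \<zero>\<^bsub>deg0 A\<^esub>}"

definition cong_im :: "('a, 'b) dgr \<Rightarrow> 'a \<Rightarrow> 'a \<Rightarrow> bool" where
  "cong_im A a a' \<longleftrightarrow> (\<exists>y\<in>carrier (deg1 A). a = a' \<oplus>\<^bsub>deg0 A\<^esub> dif A y)"

text \<open>Quasi-isomorphism: induced map on ker d is bijective, and the induced map
  R^0/im d \<rightarrow> R^0/im d on cokernels is well defined (automatic), injective and surjective.\<close>
definition quasi_iso :: "('a, 'b) dgr \<Rightarrow> ('c, 'd) dgr \<Rightarrow> ('a, 'b, 'c, 'd) dgmor \<Rightarrow> bool" where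
  "quasi_iso A B \<phi> \<longleftrightarrow>
     dg_hom A B \<phi> \<and>
     bij_betw (snd \<phi>) (dg_ker A) (dg_ker B) \<and>
     (\<forall>a\<in>carrier (deg0 A). \<forall>a'\<in>carrier (deg0 A).
        cong_im B (fst \<phi> a) (fst \<phi> a') \<longrightarrow> cong_im A a a') \<and>
     (\<forall>b\<in>carrier (deg0 B). \<exists>a\<in>carrier (deg0 A). cong_im B b (fst \<phi> a))"

definition dg_surj :: "('a, 'b) dgr \<Rightarrow> ('c, 'd) dgr \<Rightarrow> ('a, 'b, 'c, 'd) dgmor \<Rightarrow> bool" where
  "dg_surj A B \<phi> \<longleftrightarrow>
     fst \<phi> ` carrier (deg0 A) = carrier (deg0 B) \<and> snd \<phi> ` carrier (deg1 A) = carrier (deg1 B)"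

definition fib_prod :: "('a, 'b) dgr \<Rightarrow> ('c, 'd) dgr \<Rightarrow> ('a, 'b, 'e, 'f) dgmor \<Rightarrow> ('c, 'd, 'e, 'f) dgmor
    \<Rightarrow> ('a \<times> 'c, 'b \<times> 'd) dgr" where
  "fib_prod A C f g =
    \<lparr> deg0 = \<lparr> carrier = {(a, c). a \<in> carrier (deg0 A) \<and> c \<in> carrier (deg0 C) \<and> fst f a = fst g c},
               mult = (\<lambda>(a, c) (a', c'). (a \<otimes>\<^bsub>deg0 A\<^esub> a', c \<otimes>\<^bsub>deg0 C\<^esub> c')),
               one = (\<one>\<^bsub>deg0 A\<^esub>, \<one>\<^bsub>deg0 C\<^esub>),
               zero = (\<zero>\<^bsub>deg0 A\<^esub>, \<zero>\<^bsub>deg0 C\<^esub>),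
               add = (\<lambda>(a, c) (a', c'). (a \<oplus>\<^bsub>deg0 A\<^esub> a', c \<oplus>\<^bsub>deg0 C\<^esub> c')) \<rparr>,
      deg1 = \<lparr> carrier = {(x, z). x \<in> carrier (deg1 A) \<and> z \<in> carrier (deg1 C) \<and> snd f x = snd g z},
               mult = (\<lambda>_ _. (\<zero>\<^bsub>deg1 A\<^esub>, \<zero>\<^bsub>deg1 C\<^esub>)),
               one = (\<zero>\<^bsub>deg1 A\<^esub>, \<zero>\<^bsub>deg1 C\<^esub>),
               zero = (\<zero>\<^bsub>deg1 A\<^esub>, \<zero>\<^bsub>deg1 C\<^esub>),
               add = (\<lambda>(x, z) (x', z'). (x \<oplus>\<^bsub>deg1 A\<^esub> x', z \<oplus>\<^bsub>deg1 C\<^esub> z')),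
               smult = (\<lambda>(a, c) (x, z). (a \<odot>\<^bsub>deg1 A\<^esub> x, c \<odot>\<^bsub>deg1 C\<^esub> z)) \<rparr>,
      dif = (\<lambda>(x, z). (dif A x, dif C z)) \<rparr>"

text \<open>A correspondence R1 <-f- R12 -g-> R2 is represented by the triple (R12, f, g).\<close>
type_synonym ('a, 'b, 'c, 'd, 'e, 'f) corr =
  "('a, 'b) dgr \<times> ('a, 'b, 'c, 'd) dgmor \<times> ('a, 'b, 'e, 'f) dgmor"

definition is_corr :: "('c, 'd) dgr \<Rightarrow> ('e, 'f) dgr \<Rightarrow> ('a, 'b, 'c, 'd, 'e, 'f) corr \<Rightarrow> bool" where
  "is_corr R1 R2 c \<longleftrightarrow> (case c of (R12, f, g) \<Rightarrow>
     is_dgr R12 \<and> dg_hom R12 R1 f \<and> dg_hom R12 R2 g)"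

definition corr_comp ::
  "('a, 'b, 'c, 'd, 'e, 'f) corr \<Rightarrow> ('g, 'h, 'e, 'f, 'i, 'j) corr
     \<Rightarrow> ('a \<times> 'g, 'b \<times> 'h, 'c, 'd, 'i, 'j) corr" where
  "corr_comp c12 c23 = (case c12 of (R12, f, g) \<Rightarrow> case c23 of (R23, f', g') \<Rightarrow>
     (fib_prod R12 R23 g f',
      (fst f \<circ> fst, snd f \<circ> fst),
      (fst g' \<circ> snd, snd g' \<circ> snd)))"

definition weakly_admissible :: "('c, 'd) dgr \<Rightarrow> ('e, 'f) dgr \<Rightarrow> ('a, 'b, 'c, 'd, 'e, 'f) corr \<Rightarrow> bool" where
  "weakly_admissible R1 R2 c \<longleftrightarrow> is_corr R1 R2 c \<and> (case c of (R12, f, g) \<Rightarrow>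
     quasi_iso R12 R1 f \<and>
     (\<lambda>x. (snd f x, snd g x)) ` carrier (deg1 R12) = carrier (deg1 R1) \<times> carrier (deg1 R2))"

definition anamorphism :: "('c, 'd) dgr \<Rightarrow> ('e, 'f) dgr \<Rightarrow> ('a, 'b, 'c, 'd, 'e, 'f) corr \<Rightarrow> bool" where
  "anamorphism R1 R2 c \<longleftrightarrow> is_corr R1 R2 c \<and> (case c of (R12, f, g) \<Rightarrow>
     quasi_iso R12 R1 f \<and> dg_surj R12 R1 f)"

end

theory Submission
  imports Defs
begin

lemma add_hom_props:
  fixes G (structure) and H (structure)
  assumes G: "abelian_group G" and H: "abelian_group H"
    and cl: "h \<in> carrier G \<rightarrow> carrier H"
    and ad: "\<And>x y. x \<in> carrier G \<Longrightarrow> y \<in> carrier G \<Longrightarrow> h (x \<oplus>\<^bsub>G\<^esub> y) = h x \<oplus>\<^bsub>H\<^esub> h y"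
  shows "h \<zero>\<^bsub>G\<^esub> = \<zero>\<^bsub>H\<^esub>" and "\<And>x. x \<in> carrier G \<Longrightarrow> h (\<ominus>\<^bsub>G\<^esub> x) = \<ominus>\<^bsub>H\<^esub> h x"
proof -
  have "abelian_group_hom G H h"
  proof (rule abelian_group_homI[OF G H])
    show "group_hom (add_monoid G) (add_monoid H) h"
      apply (rule group_hom.intro)
      using G H cl ad by (auto simp: abelian_group_def abelian_group_axioms_def comm_group_def hom_def group_hom_axioms_def)
  qed
  then interpret abelian_group_hom G H h .
  show "h \<zero>\<^bsub>G\<^esub> = \<zero>\<^bsub>H\<^esub>" by simp
  show "\<And>x. x \<in> carrier G \<Longrightarrow> h (\<ominus>\<^bsub>G\<^esub> x) = \<ominus>\<^bsub>H\<^esub> h x" by simp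
qed

lemma dgr_facts:
  assumes "is_dgr A"
  shows "cring (deg0 A)" "module (deg0 A) (deg1 A)" "abelian_group (deg1 A)"
    "\<And>x. x \<in> carrier (deg1 A) \<Longrightarrow> dif A x \<in> carrier (deg0 A)"
    "\<And>x y. x \<in> carrier (deg1 A) \<Longrightarrow> y \<in> carrier (deg1 A) \<Longrightarrow>
        dif A (x \<oplus>\<^bsub>deg1 A\<^esub> y) = dif A x \<oplus>\<^bsub>deg0 A\<^esub> dif A y"
    "\<And>r x. r \<in> carrier (deg0 A) \<Longrightarrow> x \<in> carrier (deg1 A) \<Longrightarrow>
        dif A (r \<odot>\<^bsub>deg1 A\<^esub> x) = r \<otimes>\<^bsub>deg0 A\<^esub> dif A x"
    "\<And>x y. x \<in> carrier (deg1 A) \<Longrightarrow> y \<in> carrier (deg1 A) \<Longrightarrow>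
        dif A x \<odot>\<^bsub>deg1 A\<^esub> y = dif A y \<odot>\<^bsub>deg1 A\<^esub> x"
    "dif A \<zero>\<^bsub>deg1 A\<^esub> = \<zero>\<^bsub>deg0 A\<^esub>"
    "\<And>x. x \<in> carrier (deg1 A) \<Longrightarrow> dif A (\<ominus>\<^bsub>deg1 A\<^esub> x) = \<ominus>\<^bsub>deg0 A\<^esub> dif A x"
proof -
  show c: "cring (deg0 A)" "module (deg0 A) (deg1 A)" using assms by (auto simp: is_dgr_def)
  show ab: "abelian_group (deg1 A)" using c(2) module.axioms(2) by blast
  show "\<And>x. x \<in> carrier (deg1 A) \<Longrightarrow> dif A x \<in> carrier (deg0 A)"
    "\<And>x y. x \<in> carrier (deg1 A) \<Longrightarrow> y \<in> carrier (deg1 A) \<Longrightarrow>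
        dif A (x \<oplus>\<^bsub>deg1 A\<^esub> y) = dif A x \<oplus>\<^bsub>deg0 A\<^esub> dif A y"
    "\<And>r x. r \<in> carrier (deg0 A) \<Longrightarrow> x \<in> carrier (deg1 A) \<Longrightarrow>
        dif A (r \<odot>\<^bsub>deg1 A\<^esub> x) = r \<otimes>\<^bsub>deg0 A\<^esub> dif A x"
    "\<And>x y. x \<in> carrier (deg1 A) \<Longrightarrow> y \<in> carrier (deg1 A) \<Longrightarrow>
        dif A x \<odot>\<^bsub>deg1 A\<^esub> y = dif A y \<odot>\<^bsub>deg1 A\<^esub> x"
    using assms by (auto simp: is_dgr_def)
  have ab0: "abelian_group (deg0 A)" using c(1) cring.axioms(1) ring.is_abelian_group by blast
  have pi: "dif A \<in> carrier (deg1 A) \<rightarrow> carrier (deg0 A)" using assms by (auto simp: is_dgr_def)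
  show "dif A \<zero>\<^bsub>deg1 A\<^esub> = \<zero>\<^bsub>deg0 A\<^esub>"
    "\<And>x. x \<in> carrier (deg1 A) \<Longrightarrow> dif A (\<ominus>\<^bsub>deg1 A\<^esub> x) = \<ominus>\<^bsub>deg0 A\<^esub> dif A x"
    using add_hom_props[OF ab ab0 pi] assms by (auto simp: is_dgr_def)
qed

lemma hom_facts:
  assumes A: "is_dgr A" and B: "is_dgr B" and h: "dg_hom A B \<phi>"
  shows "fst \<phi> \<in> ring_hom (deg0 A) (deg0 B)"
    "ring_hom_cring (deg0 A) (deg0 B) (fst \<phi>)"
    "\<And>a. a \<in> carrier (deg0 A) \<Longrightarrow> fst \<phi> a \<in> carrier (deg0 B)"
    "\<And>a b. a \<in> carrier (deg0 A) \<Longrightarrow> b \<in> carrier (deg0 A) \<Longrightarrow>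
        fst \<phi> (a \<oplus>\<^bsub>deg0 A\<^esub> b) = fst \<phi> a \<oplus>\<^bsub>deg0 B\<^esub> fst \<phi> b"
    "\<And>a b. a \<in> carrier (deg0 A) \<Longrightarrow> b \<in> carrier (deg0 A) \<Longrightarrow>
        fst \<phi> (a \<otimes>\<^bsub>deg0 A\<^esub> b) = fst \<phi> a \<otimes>\<^bsub>deg0 B\<^esub> fst \<phi> b"
    "fst \<phi> \<zero>\<^bsub>deg0 A\<^esub> = \<zero>\<^bsub>deg0 B\<^esub>"
    "fst \<phi> \<one>\<^bsub>deg0 A\<^esub> = \<one>\<^bsub>deg0 B\<^esub>"
    "\<And>a. a \<in> carrier (deg0 A) \<Longrightarrow> fst \<phi> (\<ominus>\<^bsub>deg0 A\<^esub> a) = \<ominus>\<^bsub>deg0 B\<^esub> fst \<phi> a"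
    "\<And>x. x \<in> carrier (deg1 A) \<Longrightarrow> snd \<phi> x \<in> carrier (deg1 B)"
    "\<And>x y. x \<in> carrier (deg1 A) \<Longrightarrow> y \<in> carrier (deg1 A) \<Longrightarrow>
        snd \<phi> (x \<oplus>\<^bsub>deg1 A\<^esub> y) = snd \<phi> x \<oplus>\<^bsub>deg1 B\<^esub> snd \<phi> y"
    "\<And>r x. r \<in> carrier (deg0 A) \<Longrightarrow> x \<in> carrier (deg1 A) \<Longrightarrow>
        snd \<phi> (r \<odot>\<^bsub>deg1 A\<^esub> x) = fst \<phi> r \<odot>\<^bsub>deg1 B\<^esub> snd \<phi> x"
    "\<And>x. x \<in> carrier (deg1 A) \<Longrightarrow> fst \<phi> (dif A x) = dif B (snd \<phi> x)"
    "snd \<phi> \<zero>\<^bsub>deg1 A\<^esub> = \<zero>\<^bsub>deg1 B\<^esub>"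
    "\<And>x. x \<in> carrier (deg1 A) \<Longrightarrow> snd \<phi> (\<ominus>\<^bsub>deg1 A\<^esub> x) = \<ominus>\<^bsub>deg1 B\<^esub> snd \<phi> x"
proof -
  show rh: "fst \<phi> \<in> ring_hom (deg0 A) (deg0 B)" using h by (simp add: dg_hom_def)
  show rc: "ring_hom_cring (deg0 A) (deg0 B) (fst \<phi>)"
    using rh dgr_facts(1)[OF A] dgr_facts(1)[OF B]
    by (intro ring_hom_cring.intro ring_hom_cring_axioms.intro) auto
  interpret ring_hom_cring "deg0 A" "deg0 B" "fst \<phi>" by (rule rc)
  show "\<And>a. a \<in> carrier (deg0 A) \<Longrightarrow> fst \<phi> a \<in> carrier (deg0 B)"
    "\<And>a b. a \<in> carrier (deg0 A) \<Longrightarrow> b \<in> carrier (deg0 A) \<Longrightarrow>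
        fst \<phi> (a \<oplus>\<^bsub>deg0 A\<^esub> b) = fst \<phi> a \<oplus>\<^bsub>deg0 B\<^esub> fst \<phi> b"
    "\<And>a b. a \<in> carrier (deg0 A) \<Longrightarrow> b \<in> carrier (deg0 A) \<Longrightarrow>
        fst \<phi> (a \<otimes>\<^bsub>deg0 A\<^esub> b) = fst \<phi> a \<otimes>\<^bsub>deg0 B\<^esub> fst \<phi> b"
    "fst \<phi> \<zero>\<^bsub>deg0 A\<^esub> = \<zero>\<^bsub>deg0 B\<^esub>"
    "fst \<phi> \<one>\<^bsub>deg0 A\<^esub> = \<one>\<^bsub>deg0 B\<^esub>"
    "\<And>a. a \<in> carrier (deg0 A) \<Longrightarrow> fst \<phi> (\<ominus>\<^bsub>deg0 A\<^esub> a) = \<ominus>\<^bsub>deg0 B\<^esub> fst \<phi> a"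
    by auto
  show "\<And>x. x \<in> carrier (deg1 A) \<Longrightarrow> snd \<phi> x \<in> carrier (deg1 B)"
    "\<And>x y. x \<in> carrier (deg1 A) \<Longrightarrow> y \<in> carrier (deg1 A) \<Longrightarrow>
        snd \<phi> (x \<oplus>\<^bsub>deg1 A\<^esub> y) = snd \<phi> x \<oplus>\<^bsub>deg1 B\<^esub> snd \<phi> y"
    "\<And>r x. r \<in> carrier (deg0 A) \<Longrightarrow> x \<in> carrier (deg1 A) \<Longrightarrow>
        snd \<phi> (r \<odot>\<^bsub>deg1 A\<^esub> x) = fst \<phi> r \<odot>\<^bsub>deg1 B\<^esub> snd \<phi> x"
    "\<And>x. x \<in> carrier (deg1 A) \<Longrightarrow> fst \<phi> (dif A x) = dif B (snd \<phi> x)"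
    using h by (auto simp: dg_hom_def)
  have pi: "snd \<phi> \<in> carrier (deg1 A) \<rightarrow> carrier (deg1 B)" using h by (simp add: dg_hom_def)
  show "snd \<phi> \<zero>\<^bsub>deg1 A\<^esub> = \<zero>\<^bsub>deg1 B\<^esub>"
    "\<And>x. x \<in> carrier (deg1 A) \<Longrightarrow> snd \<phi> (\<ominus>\<^bsub>deg1 A\<^esub> x) = \<ominus>\<^bsub>deg1 B\<^esub> snd \<phi> x"
    using add_hom_props[OF dgr_facts(3)[OF A] dgr_facts(3)[OF B] pi] h by (auto simp: dg_hom_def)
qed

lemma fib_dgr:
  assumes A: "is_dgr A" and B: "is_dgr B" and C: "is_dgr C"
    and f: "dg_hom A B f" and g: "dg_hom C B g"
  shows "is_dgr (fib_prod A C f g)"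
proof -
  interpret A0: cring "deg0 A" by (rule dgr_facts(1)[OF A])
  interpret C0: cring "deg0 C" by (rule dgr_facts(1)[OF C])
  interpret B0: cring "deg0 B" by (rule dgr_facts(1)[OF B])
  interpret A1: module "deg0 A" "deg1 A" by (rule dgr_facts(2)[OF A])
  interpret C1: module "deg0 C" "deg1 C" by (rule dgr_facts(2)[OF C])
  interpret B1: module "deg0 B" "deg1 B" by (rule dgr_facts(2)[OF B])
  note hf = hom_facts[OF A B f] and hg = hom_facts[OF C B g]
  note dA = dgr_facts[OF A] and dC = dgr_facts[OF C]
  let ?P = "fib_prod A C f g"
  have ag0: "abelian_group (deg0 ?P)"
    apply (rule abelian_groupI)
    apply (auto simp: fib_prod_def hf hg A0.a_ac C0.a_ac)
    subgoal for a c by (rule exI[of _ "\<ominus>\<^bsub>deg0 A\<^esub> a"], rule conjI, simp, rule exI[of _ "\<ominus>\<^bsub>deg0 C\<^esub> c"]) (auto simp: hf hg A0.l_neg C0.l_neg)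
    done
  have cm0: "comm_monoid (deg0 ?P)"
    by (rule comm_monoidI) (auto simp: fib_prod_def hf hg A0.m_ac C0.m_ac)
  have cr: "cring (deg0 ?P)"
    by (rule cringI[OF ag0 cm0]) (auto simp: fib_prod_def A0.l_distr C0.l_distr)
  have ag1: "abelian_group (deg1 ?P)"
    apply (rule abelian_groupI)
    apply (auto simp: fib_prod_def hf hg A1.a_ac C1.a_ac)
    subgoal for a c by (rule exI[of _ "\<ominus>\<^bsub>deg1 A\<^esub> a"], rule conjI, simp, rule exI[of _ "\<ominus>\<^bsub>deg1 C\<^esub> c"]) (auto simp: hf hg A1.l_neg C1.l_neg)
    done
  have md: "module (deg0 ?P) (deg1 ?P)"
    by (rule moduleI[OF cr ag1])
      (auto simp: fib_prod_def hf hg A1.smult_l_distr C1.smult_l_distr A1.smult_r_distr C1.smult_r_distr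
        A1.smult_assoc1 C1.smult_assoc1)
  show ?thesis
    unfolding is_dgr_def
    apply (intro conjI cr md)
    apply (auto simp: fib_prod_def dA dC hf hg)
    done
qed

lemma fib_simps:
  "carrier (deg0 (fib_prod A C f g)) = {(a, c). a \<in> carrier (deg0 A) \<and> c \<in> carrier (deg0 C) \<and> fst f a = fst g c}"
  "carrier (deg1 (fib_prod A C f g)) = {(x, z). x \<in> carrier (deg1 A) \<and> z \<in> carrier (deg1 C) \<and> snd f x = snd g z}"
  "(a, c) \<oplus>\<^bsub>deg0 (fib_prod A C f g)\<^esub> (a', c') = (a \<oplus>\<^bsub>deg0 A\<^esub> a', c \<oplus>\<^bsub>deg0 C\<^esub> c')"
  "(a, c) \<otimes>\<^bsub>deg0 (fib_prod A C f g)\<^esub> (a', c') = (a \<otimes>\<^bsub>deg0 A\<^esub> a', c \<otimes>\<^bsub>deg0 C\<^esub> c')"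
  "\<zero>\<^bsub>deg0 (fib_prod A C f g)\<^esub> = (\<zero>\<^bsub>deg0 A\<^esub>, \<zero>\<^bsub>deg0 C\<^esub>)"
  "\<one>\<^bsub>deg0 (fib_prod A C f g)\<^esub> = (\<one>\<^bsub>deg0 A\<^esub>, \<one>\<^bsub>deg0 C\<^esub>)"
  "(x, z) \<oplus>\<^bsub>deg1 (fib_prod A C f g)\<^esub> (x', z') = (x \<oplus>\<^bsub>deg1 A\<^esub> x', z \<oplus>\<^bsub>deg1 C\<^esub> z')"
  "(a, c) \<odot>\<^bsub>deg1 (fib_prod A C f g)\<^esub> (x, z) = (a \<odot>\<^bsub>deg1 A\<^esub> x, c \<odot>\<^bsub>deg1 C\<^esub> z)"
  "\<zero>\<^bsub>deg1 (fib_prod A C f g)\<^esub> = (\<zero>\<^bsub>deg1 A\<^esub>, \<zero>\<^bsub>deg1 C\<^esub>)"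
  "dif (fib_prod A C f g) (x, z) = (dif A x, dif C z)"
  by (simp_all add: fib_prod_def)

lemma proj1_hom:
  assumes A: "is_dgr A" and B: "is_dgr B" and C: "is_dgr C"
    and f: "dg_hom A B f" and g: "dg_hom C B g"
  shows "dg_hom (fib_prod A C f g) A (fst, fst)"
  unfolding dg_hom_def
  by (auto simp: ring_hom_def fib_simps(1-7) fib_prod_def)

lemma proj2_hom:
  assumes A: "is_dgr A" and B: "is_dgr B" and C: "is_dgr C"
    and f: "dg_hom A B f" and g: "dg_hom C B g"
  shows "dg_hom (fib_prod A C f g) C (snd, snd)"
  unfolding dg_hom_def
  by (auto simp: ring_hom_def fib_simps(1-7) fib_prod_def)

lemma hom_comp:
  assumes A: "is_dgr A" and B: "is_dgr B" and C: "is_dgr C"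
    and f: "dg_hom A B \<phi>" and g: "dg_hom B C \<psi>"
  shows "dg_hom A C (fst \<psi> \<circ> fst \<phi>, snd \<psi> \<circ> snd \<phi>)"
  using hom_facts[OF A B f] hom_facts[OF B C g]
  unfolding dg_hom_def by (auto intro: ring_hom_trans)

lemma cong_im_hom:
  assumes A: "is_dgr A" and B: "is_dgr B" and f: "dg_hom A B \<phi>"
    and c: "cong_im A a a'" and a': "a' \<in> carrier (deg0 A)"
  shows "cong_im B (fst \<phi> a) (fst \<phi> a')"
proof -
  obtain y where y: "y \<in> carrier (deg1 A)" "a = a' \<oplus>\<^bsub>deg0 A\<^esub> dif A y"
    using c by (auto simp: cong_im_def)
  show ?thesis unfolding cong_im_def
      using y a' hom_facts[OF A B f] dgr_facts[OF A]
      by (intro bexI[of _ "snd \<phi> y"]) auto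
qed

lemma cong_im_trans:
  assumes A: "is_dgr A" and c1: "cong_im A a b" and c2: "cong_im A b c"
    and c: "c \<in> carrier (deg0 A)"
  shows "cong_im A a c"
proof -
  interpret A0: cring "deg0 A" by (rule dgr_facts(1)[OF A])
  interpret A1: module "deg0 A" "deg1 A" by (rule dgr_facts(2)[OF A])
  obtain y where y: "y \<in> carrier (deg1 A)" "a = b \<oplus>\<^bsub>deg0 A\<^esub> dif A y"
    using c1 by (auto simp: cong_im_def)
  obtain y' where y': "y' \<in> carrier (deg1 A)" "b = c \<oplus>\<^bsub>deg0 A\<^esub> dif A y'"
    using c2 by (auto simp: cong_im_def)
  show ?thesis unfolding cong_im_def
    using y y' c dgr_facts[OF A]
    by (intro bexI[of _ "y' \<oplus>\<^bsub>deg1 A\<^esub> y"]) (auto simp: A0.a_assoc)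
qed

lemma qiso_comp:
  assumes A: "is_dgr A" and B: "is_dgr B" and C: "is_dgr C"
    and f: "quasi_iso A B \<phi>" and g: "quasi_iso B C \<psi>"
  shows "quasi_iso A C (fst \<psi> \<circ> fst \<phi>, snd \<psi> \<circ> snd \<phi>)"
proof -
  have hf: "dg_hom A B \<phi>" and hg: "dg_hom B C \<psi>" using f g by (auto simp: quasi_iso_def)
  have "bij_betw (snd \<psi> \<circ> snd \<phi>) (dg_ker A) (dg_ker C)"
    using f g by (auto simp: quasi_iso_def intro: bij_betw_trans)
  moreover have "cong_im A a a'" if "a \<in> carrier (deg0 A)" "a' \<in> carrier (deg0 A)"
      "cong_im C (fst \<psi> (fst \<phi> a)) (fst \<psi> (fst \<phi> a'))" for a a'
    using that f g hom_facts(3)[OF A B hf] by (auto simp: quasi_iso_def)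
  moreover have "\<exists>a\<in>carrier (deg0 A). cong_im C b (fst \<psi> (fst \<phi> a))" if b: "b \<in> carrier (deg0 C)" for b
  proof -
    obtain b' where b': "b' \<in> carrier (deg0 B)" "cong_im C b (fst \<psi> b')"
      using g b by (auto simp: quasi_iso_def)
    obtain a where a: "a \<in> carrier (deg0 A)" "cong_im B b' (fst \<phi> a)"
      using f b'(1) by (auto simp: quasi_iso_def)
    have "cong_im C (fst \<psi> b') (fst \<psi> (fst \<phi> a))"
      by (rule cong_im_hom[OF B C hg a(2)]) (rule hom_facts(3)[OF A B hf a(1)])
    then have "cong_im C b (fst \<psi> (fst \<phi> a))"
      using cong_im_trans[OF C b'(2)] hom_facts(3)[OF B C hg] hom_facts(3)[OF A B hf] a(1) by blast
    then show ?thesis using a(1) by blast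
  qed
  ultimately show ?thesis
    using hom_comp[OF A B C hf hg] by (simp add: quasi_iso_def)
qed

lemma proj_qiso:
  assumes A: "is_dgr A" and B: "is_dgr B" and C: "is_dgr C"
    and g: "dg_hom A B g" and f': "quasi_iso C B f'"
    and s1: "snd f' ` carrier (deg1 C) = carrier (deg1 B)"
  shows "quasi_iso (fib_prod A C g f') A (fst, fst)"
proof -
  interpret A0: cring "deg0 A" by (rule dgr_facts(1)[OF A])
  interpret C0: cring "deg0 C" by (rule dgr_facts(1)[OF C])
  interpret B0: cring "deg0 B" by (rule dgr_facts(1)[OF B])
  interpret A1: module "deg0 A" "deg1 A" by (rule dgr_facts(2)[OF A])
  interpret C1: module "deg0 C" "deg1 C" by (rule dgr_facts(2)[OF C])
  interpret B1: module "deg0 B" "deg1 B" by (rule dgr_facts(2)[OF B])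
  have hf': "dg_hom C B f'" using f' by (simp add: quasi_iso_def)
  note hg = hom_facts[OF A B g] and hf = hom_facts[OF C B hf']
  note dA = dgr_facts[OF A] and dB = dgr_facts[OF B] and dC = dgr_facts[OF C]
  have bij: "bij_betw (snd f') (dg_ker C) (dg_ker B)" using f' by (simp add: quasi_iso_def)
  have cinj: "\<And>a a'. a \<in> carrier (deg0 C) \<Longrightarrow> a' \<in> carrier (deg0 C) \<Longrightarrow>
        cong_im B (fst f' a) (fst f' a') \<Longrightarrow> cong_im C a a'"
    using f' by (simp add: quasi_iso_def)
  have csurj: "\<And>b. b \<in> carrier (deg0 B) \<Longrightarrow> \<exists>a\<in>carrier (deg0 C). cong_im B b (fst f' a)"
    using f' by (simp add: quasi_iso_def)
  let ?P = "fib_prod A C g f'"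
  have kerP: "dg_ker ?P = {(x, z). x \<in> carrier (deg1 A) \<and> z \<in> carrier (deg1 C) \<and> snd g x = snd f' z
      \<and> dif A x = \<zero>\<^bsub>deg0 A\<^esub> \<and> dif C z = \<zero>\<^bsub>deg0 C\<^esub>}"
    by (auto simp: dg_ker_def fib_simps)
  have "bij_betw fst (dg_ker ?P) (dg_ker A)"
  proof (rule bij_betw_imageI)
    show "inj_on fst (dg_ker ?P)"
    proof (rule inj_onI)
      fix p q assume p: "p \<in> dg_ker ?P" and q: "q \<in> dg_ker ?P" and e: "fst p = fst q"
      obtain x z where pz: "p = (x, z)" by (cases p)
      obtain x' z' where qz: "q = (x', z')" by (cases q)
      have "z \<in> dg_ker C" "z' \<in> dg_ker C" "snd f' z = snd f' z'"
        using p[unfolded kerP] q[unfolded kerP] e pz qz by (auto simp: dg_ker_def)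
      then have "z = z'" using bij by (auto simp: bij_betw_def inj_on_def)
      then show "p = q" using pz qz e by simp
    qed
    show "fst ` dg_ker ?P = dg_ker A"
    proof
      show "fst ` dg_ker ?P \<subseteq> dg_ker A" unfolding kerP by (auto simp: dg_ker_def)
      show "dg_ker A \<subseteq> fst ` dg_ker ?P"
      proof
        fix x assume x: "x \<in> dg_ker A"
        have "snd g x \<in> dg_ker B" using x hg dA by (auto simp: dg_ker_def simp flip: hg(12))
        then obtain z where z: "z \<in> dg_ker C" "snd f' z = snd g x"
          using bij by (metis bij_betw_def imageE)
        have "(x, z) \<in> dg_ker ?P" using x z unfolding kerP by (auto simp: dg_ker_def)
        then show "x \<in> fst ` dg_ker ?P" by force
      qed
    qed
  qed
  moreover have "cong_im ?P p p'" if p: "p \<in> carrier (deg0 ?P)" and p': "p' \<in> carrier (deg0 ?P)"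
      and cg: "cong_im A (fst p) (fst p')" for p p'
  proof -
    obtain a c where pe: "p = (a, c)" by (cases p)
    obtain a' c' where pe': "p' = (a', c')" by (cases p')
    have a: "a \<in> carrier (deg0 A)" "c \<in> carrier (deg0 C)" "fst g a = fst f' c"
      using p pe by (auto simp: fib_simps)
    have a': "a' \<in> carrier (deg0 A)" "c' \<in> carrier (deg0 C)" "fst g a' = fst f' c'"
      using p' pe' by (auto simp: fib_simps)
    obtain x where x: "x \<in> carrier (deg1 A)" "a = a' \<oplus>\<^bsub>deg0 A\<^esub> dif A x"
      using cg pe pe' by (auto simp: cong_im_def)
    obtain z0 where z0: "z0 \<in> carrier (deg1 C)" "snd f' z0 = snd g x"
      using s1 hg(9)[OF x(1)] by (metis imageE)
    define e where "e = c \<ominus>\<^bsub>deg0 C\<^esub> (c' \<oplus>\<^bsub>deg0 C\<^esub> dif C z0)"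
    have ec: "e \<in> carrier (deg0 C)" using a' a z0 dC by (simp add: e_def)
    have "fst f' e = fst g a \<ominus>\<^bsub>deg0 B\<^esub> (fst g a' \<oplus>\<^bsub>deg0 B\<^esub> fst g (dif A x))"
      using a a' z0 x dC by (simp add: e_def a_minus_def hf hg)
    also have "\<dots> = \<zero>\<^bsub>deg0 B\<^esub>"
    proof -
      have ga: "fst g a = fst g a' \<oplus>\<^bsub>deg0 B\<^esub> fst g (dif A x)"
        using x a' dA hg(4) by simp
      show ?thesis unfolding ga[symmetric] a_minus_def by (rule B0.r_neg) (rule hg(3)[OF a(1)])
    qed
    finally have fe: "fst f' e = \<zero>\<^bsub>deg0 B\<^esub>" .
    have "cong_im B (fst f' e) (fst f' \<zero>\<^bsub>deg0 C\<^esub>)"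
      unfolding cong_im_def using fe hf dB by (intro bexI[of _ "\<zero>\<^bsub>deg1 B\<^esub>"]) auto
    then have "cong_im C e \<zero>\<^bsub>deg0 C\<^esub>" using cinj ec by simp
    then obtain w1 where w1a: "w1 \<in> carrier (deg1 C)" "e = \<zero>\<^bsub>deg0 C\<^esub> \<oplus>\<^bsub>deg0 C\<^esub> dif C w1"
      unfolding cong_im_def by blast
    have w1: "w1 \<in> carrier (deg1 C)" "e = dif C w1"
      using w1a dC(4)[OF w1a(1)] by auto
    have "dif B (snd f' w1) = \<zero>\<^bsub>deg0 B\<^esub>"
      using hf(12)[OF w1(1)] w1(2) fe by metis
    then have "snd f' w1 \<in> dg_ker B"
      using hf(9)[OF w1(1)] by (simp add: dg_ker_def)
    then obtain k where k: "k \<in> dg_ker C" "snd f' k = snd f' w1"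
      using bij unfolding bij_betw_def by (metis imageE)
    have kc: "k \<in> carrier (deg1 C)" "dif C k = \<zero>\<^bsub>deg0 C\<^esub>" using k by (auto simp: dg_ker_def)
    define z where "z = z0 \<oplus>\<^bsub>deg1 C\<^esub> (w1 \<ominus>\<^bsub>deg1 C\<^esub> k)"
    have zc: "z \<in> carrier (deg1 C)" using z0 w1 kc by (simp add: z_def)
    have zf: "snd f' z = snd g x"
      using z0 w1 kc k hf hg(9)[OF x(1)] by (simp add: z_def a_minus_def B1.r_neg)
    have zd: "dif C z = dif C z0 \<oplus>\<^bsub>deg0 C\<^esub> e"
      using z0 w1 kc dC by (simp add: z_def a_minus_def)
    have cz: "c = c' \<oplus>\<^bsub>deg0 C\<^esub> dif C z"
    proof -
      define u where "u = c' \<oplus>\<^bsub>deg0 C\<^esub> dif C z0"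
      have u: "u \<in> carrier (deg0 C)" using a' z0 dC by (simp add: u_def)
      have "c' \<oplus>\<^bsub>deg0 C\<^esub> dif C z = u \<oplus>\<^bsub>deg0 C\<^esub> e"
        unfolding zd u_def using a' z0 dC ec by (simp add: C0.a_assoc)
      also have "\<dots> = c \<oplus>\<^bsub>deg0 C\<^esub> (u \<oplus>\<^bsub>deg0 C\<^esub> \<ominus>\<^bsub>deg0 C\<^esub> u)"
        unfolding e_def u_def[symmetric] a_minus_def using u a(2) by (simp add: C0.a_lcomm)
      also have "\<dots> = c" using u a(2) by (simp add: C0.r_neg)
      finally show ?thesis by simp
    qed
    show ?thesis unfolding cong_im_def
      using pe pe' x zc zf cz
      by (intro bexI[of _ "(x, z)"]) (auto simp: fib_simps)
  qed
  moreover have "\<exists>p\<in>carrier (deg0 ?P). cong_im A b (fst p)" if b: "b \<in> carrier (deg0 A)" for b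
  proof -
    obtain c where c: "c \<in> carrier (deg0 C)" "cong_im B (fst g b) (fst f' c)"
      using csurj hg(3)[OF b] by blast
    obtain y where y: "y \<in> carrier (deg1 B)" "fst g b = fst f' c \<oplus>\<^bsub>deg0 B\<^esub> dif B y"
      using c by (auto simp: cong_im_def)
    obtain z where z: "z \<in> carrier (deg1 C)" "snd f' z = y"
      using s1 y(1) by (metis imageE)
    have "(b, c \<oplus>\<^bsub>deg0 C\<^esub> dif C z) \<in> carrier (deg0 ?P)"
      using b c z y dC by (auto simp: fib_simps hf)
    moreover have "cong_im A b b" unfolding cong_im_def
      using b dA by (intro bexI[of _ "\<zero>\<^bsub>deg1 A\<^esub>"]) auto
    ultimately show ?thesis by force
  qed
  ultimately show ?thesis
    using proj1_hom[OF A B C g hf'] by (simp add: quasi_iso_def)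
qed


lemma comp_common:
  assumes R1: "is_dgr R1" and R2: "is_dgr R2" and R3: "is_dgr R3"
    and c1: "is_corr R1 R2 (R12, f, g)" and c2: "is_corr R2 R3 (R23, f', g')"
    and q1: "quasi_iso R12 R1 f" and q2: "quasi_iso R23 R2 f'"
    and s1: "snd f' ` carrier (deg1 R23) = carrier (deg1 R2)"
  shows "is_corr R1 R3 (fib_prod R12 R23 g f', (fst f \<circ> fst, snd f \<circ> fst), (fst g' \<circ> snd, snd g' \<circ> snd))"
    "quasi_iso (fib_prod R12 R23 g f') R1 (fst f \<circ> fst, snd f \<circ> fst)"
proof -
  have A: "is_dgr R12" and hf: "dg_hom R12 R1 f" and hg: "dg_hom R12 R2 g" using c1 by (auto simp: is_corr_def)
  have C: "is_dgr R23" and hf': "dg_hom R23 R2 f'" and hg': "dg_hom R23 R3 g'" using c2 by (auto simp: is_corr_def)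
  have P: "is_dgr (fib_prod R12 R23 g f')" by (rule fib_dgr[OF A R2 C hg hf'])
  have "dg_hom (fib_prod R12 R23 g f') R1 (fst f \<circ> fst, snd f \<circ> fst)"
    using hom_comp[OF P A R1 proj1_hom[OF A R2 C hg hf'] hf] by simp
  moreover have "dg_hom (fib_prod R12 R23 g f') R3 (fst g' \<circ> snd, snd g' \<circ> snd)"
    using hom_comp[OF P C R3 proj2_hom[OF A R2 C hg hf'] hg'] by simp
  ultimately show "is_corr R1 R3 (fib_prod R12 R23 g f', (fst f \<circ> fst, snd f \<circ> fst), (fst g' \<circ> snd, snd g' \<circ> snd))"
    using P by (simp add: is_corr_def)
  show "quasi_iso (fib_prod R12 R23 g f') R1 (fst f \<circ> fst, snd f \<circ> fst)"
    using qiso_comp[OF P A R1 proj_qiso[OF A R2 C hg q2 s1] q1] by simp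
qed

theorem lemma4p2p5:
  fixes R1 :: "('a1, 'b1) dgr" and R2 :: "('a2, 'b2) dgr" and R3 :: "('a3, 'b3) dgr"
    and c12 :: "('a12, 'b12, 'a1, 'b1, 'a2, 'b2) corr"
    and c23 :: "('a23, 'b23, 'a2, 'b2, 'a3, 'b3) corr"
  assumes "is_dgr R1" and "is_dgr R2" and "is_dgr R3"
  shows "(weakly_admissible R1 R2 c12 \<and> weakly_admissible R2 R3 c23
            \<longrightarrow> weakly_admissible R1 R3 (corr_comp c12 c23)) \<and>
         (anamorphism R1 R2 c12 \<and> anamorphism R2 R3 c23
            \<longrightarrow> anamorphism R1 R3 (corr_comp c12 c23))"
proof -
  obtain R12 f g where c12: "c12 = (R12, f, g)" by (cases c12) auto
  obtain R23 f' g' where c23: "c23 = (R23, f', g')" by (cases c23) auto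
  have cc: "corr_comp c12 c23 = (fib_prod R12 R23 g f', (fst f \<circ> fst, snd f \<circ> fst), (fst g' \<circ> snd, snd g' \<circ> snd))"
    by (simp add: c12 c23 corr_comp_def)
  note R = assms
  show ?thesis
  proof (intro conjI impI)
    assume h: "weakly_admissible R1 R2 c12 \<and> weakly_admissible R2 R3 c23"
    have c1: "is_corr R1 R2 (R12, f, g)" and q1: "quasi_iso R12 R1 f"
      and im1: "(\<lambda>x. (snd f x, snd g x)) ` carrier (deg1 R12) = carrier (deg1 R1) \<times> carrier (deg1 R2)"
      using h by (auto simp: weakly_admissible_def c12)
    have c2: "is_corr R2 R3 (R23, f', g')" and q2: "quasi_iso R23 R2 f'"
      and im2: "(\<lambda>x. (snd f' x, snd g' x)) ` carrier (deg1 R23) = carrier (deg1 R2) \<times> carrier (deg1 R3)"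
      using h by (auto simp: weakly_admissible_def c23)
    have s1: "snd f' ` carrier (deg1 R23) = carrier (deg1 R2)"
    proof -
      have "snd f' ` carrier (deg1 R23) = fst ` ((\<lambda>x. (snd f' x, snd g' x)) ` carrier (deg1 R23))"
        by (simp add: image_image)
      also have "\<dots> = carrier (deg1 R2)"
        unfolding im2 using dgr_facts(3)[OF R(3)]
        by (metis abelian_group.axioms(1) abelian_monoid.zero_closed fst_image_times empty_iff)
      finally show ?thesis .
    qed
    note cm = comp_common[OF R c1 c2 q1 q2 s1]
    have "(\<lambda>x. ((snd f \<circ> fst) x, (snd g' \<circ> snd) x)) ` carrier (deg1 (fib_prod R12 R23 g f'))
          = carrier (deg1 R1) \<times> carrier (deg1 R3)"
    proof
      have A: "is_dgr R12" and hf: "dg_hom R12 R1 f" and hg: "dg_hom R12 R2 g" using c1 by (auto simp: is_corr_def)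
      have C: "is_dgr R23" and hf': "dg_hom R23 R2 f'" and hg': "dg_hom R23 R3 g'" using c2 by (auto simp: is_corr_def)
      show "(\<lambda>x. ((snd f \<circ> fst) x, (snd g' \<circ> snd) x)) ` carrier (deg1 (fib_prod R12 R23 g f'))
          \<subseteq> carrier (deg1 R1) \<times> carrier (deg1 R3)"
        using hom_facts(9)[OF A R(1) hf] hom_facts(9)[OF C R(3) hg'] by (auto simp: fib_simps)
      show "carrier (deg1 R1) \<times> carrier (deg1 R3) \<subseteq> (\<lambda>x. ((snd f \<circ> fst) x, (snd g' \<circ> snd) x)) ` carrier (deg1 (fib_prod R12 R23 g f'))"
      proof clarify
        fix u v assume u: "u \<in> carrier (deg1 R1)" and v: "v \<in> carrier (deg1 R3)"
        have "(u, \<zero>\<^bsub>deg1 R2\<^esub>) \<in> carrier (deg1 R1) \<times> carrier (deg1 R2)"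
          using u dgr_facts(3)[OF R(2)] by (simp add: abelian_group.axioms(1) abelian_monoid.zero_closed)
        then obtain x where x: "x \<in> carrier (deg1 R12)" "snd f x = u" "snd g x = \<zero>\<^bsub>deg1 R2\<^esub>"
          unfolding im1[symmetric] by auto
        have "(snd g x, v) \<in> carrier (deg1 R2) \<times> carrier (deg1 R3)"
          using hom_facts(9)[OF A R(2) hg x(1)] v by simp
        then obtain z where z: "z \<in> carrier (deg1 R23)" "snd f' z = snd g x" "snd g' z = v"
          unfolding im2[symmetric] by auto
        have "(x, z) \<in> carrier (deg1 (fib_prod R12 R23 g f'))" using x z by (simp add: fib_simps)
        moreover have "(u, v) = (\<lambda>x. ((snd f \<circ> fst) x, (snd g' \<circ> snd) x)) (x, z)" using x z by simp
        ultimately show "(u, v) \<in> (\<lambda>x. ((snd f \<circ> fst) x, (snd g' \<circ> snd) x)) ` carrier (deg1 (fib_prod R12 R23 g f'))"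
          by blast
      qed
    qed
    then show "weakly_admissible R1 R3 (corr_comp c12 c23)"
      using cm by (simp add: cc weakly_admissible_def)
  next
    assume h: "anamorphism R1 R2 c12 \<and> anamorphism R2 R3 c23"
    have c1: "is_corr R1 R2 (R12, f, g)" and q1: "quasi_iso R12 R1 f" and sj1: "dg_surj R12 R1 f"
      using h by (auto simp: anamorphism_def c12)
    have c2: "is_corr R2 R3 (R23, f', g')" and q2: "quasi_iso R23 R2 f'" and sj2: "dg_surj R23 R2 f'"
      using h by (auto simp: anamorphism_def c23)
    have s1: "snd f' ` carrier (deg1 R23) = carrier (deg1 R2)" using sj2 by (simp add: dg_surj_def)
    note cm = comp_common[OF R c1 c2 q1 q2 s1]
    have A: "is_dgr R12" and hf: "dg_hom R12 R1 f" and hg: "dg_hom R12 R2 g" using c1 by (auto simp: is_corr_def)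
    have C: "is_dgr R23" and hf': "dg_hom R23 R2 f'" and hg': "dg_hom R23 R3 g'" using c2 by (auto simp: is_corr_def)
    have "dg_surj (fib_prod R12 R23 g f') R1 (fst f \<circ> fst, snd f \<circ> fst)"
      unfolding dg_surj_def
    proof (intro conjI equalityI subsetI)
      fix b assume "b \<in> (fst (fst f \<circ> fst, snd f \<circ> fst)) ` carrier (deg0 (fib_prod R12 R23 g f'))"
      then show "b \<in> carrier (deg0 R1)" using hom_facts(3)[OF A R(1) hf] by (auto simp: fib_simps)
    next
      fix b assume b: "b \<in> carrier (deg0 R1)"
      then obtain a where a: "a \<in> carrier (deg0 R12)" "fst f a = b" using sj1 b unfolding dg_surj_def by (metis imageE)
      have "fst g a \<in> carrier (deg0 R2)" using hom_facts(3)[OF A R(2) hg] a by simp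
      then obtain c where c: "c \<in> carrier (deg0 R23)" "fst f' c = fst g a" using sj2 unfolding dg_surj_def by (metis imageE)
      have "(a, c) \<in> carrier (deg0 (fib_prod R12 R23 g f'))" using a c by (simp add: fib_simps)
      then show "b \<in> (fst (fst f \<circ> fst, snd f \<circ> fst)) ` carrier (deg0 (fib_prod R12 R23 g f'))"
        using a by force
    next
      fix b assume "b \<in> (snd (fst f \<circ> fst, snd f \<circ> fst)) ` carrier (deg1 (fib_prod R12 R23 g f'))"
      then show "b \<in> carrier (deg1 R1)" using hom_facts(9)[OF A R(1) hf] by (auto simp: fib_simps)
    next
      fix b assume b: "b \<in> carrier (deg1 R1)"
      then obtain a where a: "a \<in> carrier (deg1 R12)" "snd f a = b" using sj1 b unfolding dg_surj_def by (metis imageE)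
      have "snd g a \<in> carrier (deg1 R2)" using hom_facts(9)[OF A R(2) hg] a by simp
      then obtain c where c: "c \<in> carrier (deg1 R23)" "snd f' c = snd g a" using sj2 unfolding dg_surj_def by (metis imageE)
      have "(a, c) \<in> carrier (deg1 (fib_prod R12 R23 g f'))" using a c by (simp add: fib_simps)
      then show "b \<in> (snd (fst f \<circ> fst, snd f \<circ> fst)) ` carrier (deg1 (fib_prod R12 R23 g f'))"
        using a by force
    qed
    then show "anamorphism R1 R3 (corr_comp c12 c23)"
      using cm by (simp add: cc anamorphism_def)
  qed
qed

end
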